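(* Let $T$ be the set of $(a_0,\dots,a_9)\in\mathbb{R}^{10}$ such that $P(x,a)=x^{11}-x^{10}+a_9x^9+\cdots+a_0$ satisfies $a_9,a_8,a_7,a_6<0$, $a_5,\dots,a_1>0$, $a_0<0$ and has exactly one positive and exactly eight negative roots, all simple. Suppose $T\ne\emptyset$, let $\Gamma$ be a connected component of $T$, $\bar\Gamma$ its closure, and let $H$ be the set of polynomials $P(x,a)$, $a\in\bar\Gamma$, all of whose roots are real. Then $H$ contains no polynomial having one triple positive root and negative roots of total multiplicity $8$. *)

theory Defs
  imports "HOL-Analysis.Analysis" "HOL-Library.Numeral_Type"
          "HOL-Computational_Algebra.Polynomial"
begin

text \<open>Coefficient a_k of a point a = (a_0,...,a_9) in R^10, for k < 10.
  The index type 10 has the ten elements of_nat 0, ..., of_nat 9.\<close>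
definition cf :: "real ^ 10 \<Rightarrow> nat \<Rightarrow> real" where
  "cf a k = a $ (of_nat k :: 10)"

definition Ppoly :: "real ^ 10 \<Rightarrow> real poly" where
  "Ppoly a = monom 1 11 - monom 1 10 + (\<Sum>k<10. monom (cf a k) k)"

definition Tset :: "(real ^ 10) set" where
  "Tset = {a. cf a 9 < 0 \<and> cf a 8 < 0 \<and> cf a 7 < 0 \<and> cf a 6 < 0
            \<and> (\<forall>k\<in>{1..5}. cf a k > 0) \<and> cf a 0 < 0
            \<and> card {x. x > 0 \<and> poly (Ppoly a) x = 0} = 1
            \<and> card {x. x < 0 \<and> poly (Ppoly a) x = 0} = 8
            \<and> (\<forall>x. poly (Ppoly a) x = 0 \<longrightarrow> order x (Ppoly a) = 1)}"

definition all_roots_real :: "real poly \<Rightarrow> bool" where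
  "all_roots_real p \<longleftrightarrow>
     (\<forall>z::complex. poly (map_poly complex_of_real p) z = 0 \<longrightarrow> z \<in> \<real>)"

end

theory Submission
  imports Defs
begin

lemma lin_coeff:
  fixes b :: real
  shows "coeff ([:b,1:] * R) k = b * coeff R k + (if k = 0 then 0 else coeff R (k - 1))"
  by (cases k) (simp_all add: coeff_pCons)

definition LP :: "real list \<Rightarrow> real poly" where
  "LP bs = prod_list (map (\<lambda>b. [:b,1:]) bs)"

lemma LP_cons: "LP (b # bs) = [:b,1:] * LP bs" by (simp add: LP_def)

lemma LP_props:
  "(\<forall>k>length bs. coeff (LP bs) k = 0) \<and> coeff (LP bs) (length bs) = 1
   \<and> (bs \<noteq> [] \<longrightarrow> coeff (LP bs) (length bs - 1) = sum_list bs)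
   \<and> coeff (LP bs) 0 = prod_list bs
   \<and> ((\<forall>b\<in>set bs. b \<noteq> 0) \<longrightarrow> coeff (LP bs) 1 = prod_list bs * sum_list (map inverse bs))"
proof (induction bs)
  case Nil
  then show ?case by (auto simp: LP_def coeff_1)
next
  case (Cons b bs)
  have IH1: "\<forall>k>length bs. coeff (LP bs) k = 0" and IH2: "coeff (LP bs) (length bs) = 1"
    and IH3: "bs \<noteq> [] \<longrightarrow> coeff (LP bs) (length bs - 1) = sum_list bs"
    and IH4: "coeff (LP bs) 0 = prod_list bs"
    and IH5: "(\<forall>b\<in>set bs. b \<noteq> 0) \<longrightarrow> coeff (LP bs) 1 = prod_list bs * sum_list (map inverse bs)"
    using Cons.IH by blast+
  have A: "\<forall>k>length (b#bs). coeff (LP (b#bs)) k = 0"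
  proof (intro allI impI)
    fix k assume k: "k > length (b#bs)"
    have "coeff (LP (b#bs)) k = b * coeff (LP bs) k + coeff (LP bs) (k - 1)"
      using k by (simp only: LP_cons lin_coeff) simp
    also have "\<dots> = 0" using k IH1 by simp
    finally show "coeff (LP (b#bs)) k = 0" .
  qed
  have B: "coeff (LP (b#bs)) (length (b#bs)) = 1"
  proof -
    have "coeff (LP (b#bs)) (length (b#bs)) = b * coeff (LP bs) (Suc (length bs)) + coeff (LP bs) (length bs)"
      by (simp only: LP_cons lin_coeff) simp
    also have "\<dots> = 1" using IH1 IH2 by simp
    finally show ?thesis .
  qed
  have C: "coeff (LP (b#bs)) (length (b#bs) - 1) = sum_list (b#bs)"
  proof (cases "bs = []")
    case True then show ?thesis by (simp add: LP_def)
  next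
    case False
    then have "coeff (LP (b#bs)) (length (b#bs) - 1) = b * coeff (LP bs) (length bs) + coeff (LP bs) (length bs - 1)"
      by (simp only: LP_cons lin_coeff) simp
    also have "\<dots> = sum_list (b#bs)" using IH2 IH3 False by simp
    finally show ?thesis .
  qed
  have D: "coeff (LP (b#bs)) 0 = prod_list (b#bs)"
  proof -
    have "coeff (LP (b#bs)) 0 = b * coeff (LP bs) 0" by (simp only: LP_cons lin_coeff) simp
    then show ?thesis using IH4 by simp
  qed
  have E: "(\<forall>c\<in>set (b#bs). c \<noteq> 0) \<longrightarrow> coeff (LP (b#bs)) 1 = prod_list (b#bs) * sum_list (map inverse (b#bs))"
  proof
    assume nz: "\<forall>c\<in>set (b#bs). c \<noteq> 0"
    have "coeff (LP (b#bs)) 1 = b * coeff (LP bs) 1 + coeff (LP bs) 0"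
      by (simp only: LP_cons lin_coeff) simp
    also have "\<dots> = b * (prod_list bs * sum_list (map inverse bs)) + prod_list bs"
      using IH4 IH5 nz by simp
    also have "\<dots> = prod_list (b#bs) * sum_list (map inverse (b#bs))"
      using nz by (simp add: algebra_simps)
    finally show "coeff (LP (b#bs)) 1 = prod_list (b#bs) * sum_list (map inverse (b#bs))" .
  qed
  show ?case
    apply (intro conjI impI)
        apply (rule A)
       apply (rule B)
      apply (rule C)
     apply (rule D)
    apply (rule mp[OF E])
    apply assumption
    done
qed

lemma amgm2:
  fixes x y n :: real
  assumes "x \<ge> 0" "y \<ge> 0" "n \<ge> 0" "x * y \<ge> n^2"
  shows "x + y \<ge> 2 * n"
proof (rule ccontr)
  assume "\<not> ?thesis"
  hence "(x+y)^2 < (2*n)^2" using assms by (intro power_strict_mono) auto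
  moreover have "(x+y)^2 \<ge> 4*(x*y)"
  proof -
    have "0 \<le> (x-y)^2" by simp
    thus ?thesis by (simp add: power2_eq_square algebra_simps)
  qed
  moreover have "(2*n)^2 = 4*n^2" by (simp add: power_mult_distrib)
  ultimately show False using assms(4) by linarith
qed

lemma amhm:
  assumes "\<forall>b\<in>set bs. b > (0::real)"
  shows "sum_list bs * sum_list (map inverse bs) \<ge> (real (length bs))^2"
  using assms
proof (induction bs)
  case Nil then show ?case by simp
next
  case (Cons b bs)
  let ?S = "sum_list bs" and ?T = "sum_list (map inverse bs)" and ?n = "real (length bs)"
  have IH: "?S * ?T \<ge> ?n^2" using Cons by auto
  have b: "b > 0" using Cons by auto
  have S: "?S \<ge> 0" using Cons.prems by (intro sum_list_nonneg) auto
  have T: "?T \<ge> 0" using Cons.prems by (intro sum_list_nonneg) auto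
  have "(b * ?T) * (?S / b) \<ge> ?n^2" using IH b by (simp add: field_simps)
  hence "b * ?T + ?S / b \<ge> 2 * ?n" using b S T by (intro amgm2) auto
  moreover have "(b + ?S) * (inverse b + ?T) = 1 + (b * ?T + ?S / b) + ?S * ?T"
    using b by (simp add: field_simps)
  moreover have "(?n + 1)^2 = ?n^2 + 2 * ?n + 1" by (simp add: power2_eq_square algebra_simps)
  ultimately have "(b + ?S) * (inverse b + ?T) \<ge> (?n + 1)^2" using IH by linarith
  then show ?case by (simp add: add.commute)
qed

lemma poly_split_roots:
  fixes p :: "real poly"
  shows "\<exists>q. p = (\<Prod>x\<in>#proots p. [:-x,1:]) * q"
proof (induction p rule: poly_root_order_induct)
  case 0 then show ?case by (intro exI[of _ 0]) simp
next
  case (no_roots p)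
  hence "proots p = {#}" by (simp add: multiset_eqI order_root)
  then show ?case by simp
next
  case (root p x n)
  then obtain q where q: "p = (\<Prod>x\<in>#proots p. [:-x,1:]) * q" by blast
  have p0: "p \<noteq> 0" using root by auto
  have "proots ([:-x,1:]^n * p) = repeat_mset n {#x#} + proots p"
    using p0 by (simp add: proots_mult proots_power)
  moreover have "(\<Prod>y\<in>#repeat_mset n {#x#}. [:-y,1:]) = [:-x,1:]^n"
    by (induction n) auto
  ultimately show ?case using q by (intro exI[of _ q]) (simp add: mult.assoc)
qed

lemma prod_lin_deg:
  "degree (\<Prod>x\<in>#M. [:-x,1::real:]) = size M \<and> lead_coeff (\<Prod>x\<in>#M. [:-x,1::real:]) = 1"
proof (induction M)
  case empty then show ?case by simp
next
  case (add x M)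
  define R where "R = (\<Prod>x\<in>#M. [:-x,1::real:])"
  have nz: "R \<noteq> 0" using add by (auto simp: R_def)
  have e: "(\<Prod>y\<in>#add_mset x M. [:-y,1::real:]) = [:-x,1:] * R" by (simp add: R_def)
  have d: "degree ([:-x,1:] * R) = 1 + degree R" by (subst degree_mult_eq) (use nz in auto)
  have l1: "lead_coeff [:-x,1::real:] = 1" by simp
  have l: "lead_coeff ([:-x,1:] * R) = lead_coeff R" using lead_coeff_mult[of "[:-x,1:]" R] l1 by simp
  have "degree R = size M" "lead_coeff R = 1" using add.IH by (auto simp: R_def)
  note RR = this
  have "degree (\<Prod>y\<in>#add_mset x M. [:-y,1::real:]) = degree ([:-x,1:] * R)" by (simp only: e)
  also have "\<dots> = size (add_mset x M)" using d RR by simp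
  finally have D1: "degree (\<Prod>y\<in>#add_mset x M. [:-y,1::real:]) = size (add_mset x M)" .
  have "lead_coeff (\<Prod>y\<in>#add_mset x M. [:-y,1::real:]) = lead_coeff ([:-x,1:] * R)" by (simp only: e)
  also have "\<dots> = 1" using l RR by simp
  finally show ?case using D1 by simp
qed

lemma coeff_Ppoly:
  "coeff (Ppoly a) n = (if n = 11 then 1 else 0) - (if n = 10 then 1 else 0) + (if n < 10 then cf a n else 0)"
  unfolding Ppoly_def by (simp add: coeff_sum coeff_monom)

lemma degree_Ppoly: "degree (Ppoly a) = 11"
proof (rule antisym)
  show "degree (Ppoly a) \<le> 11" by (rule degree_le) (simp add: coeff_Ppoly)
  show "11 \<le> degree (Ppoly a)" by (rule le_degree) (simp add: coeff_Ppoly)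
qed

theorem lemma10:
  fixes \<Gamma> :: "(real ^ 10) set"
  assumes "Tset \<noteq> {}"
    and "\<Gamma> \<in> components Tset"
  shows "\<not> (\<exists>a \<in> closure \<Gamma>. all_roots_real (Ppoly a)
            \<and> (\<exists>x>0. poly (Ppoly a) x = 0 \<and> order x (Ppoly a) = 3)
            \<and> (\<Sum>x\<in>{x. x < 0 \<and> poly (Ppoly a) x = 0}. order x (Ppoly a)) = 8)"
proof
  assume "\<exists>a \<in> closure \<Gamma>. all_roots_real (Ppoly a)
            \<and> (\<exists>x>0. poly (Ppoly a) x = 0 \<and> order x (Ppoly a) = 3)
            \<and> (\<Sum>x\<in>{x. x < 0 \<and> poly (Ppoly a) x = 0}. order x (Ppoly a)) = 8"
  then obtain a x0 where a: "a \<in> closure \<Gamma>" and x0: "x0 > 0" "poly (Ppoly a) x0 = 0"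
    "order x0 (Ppoly a) = 3"
    and neg: "(\<Sum>x\<in>{x. x < 0 \<and> poly (Ppoly a) x = 0}. order x (Ppoly a)) = 8"
    by blast
  define P where "P = Ppoly a"
  define N where "N = {x. x < 0 \<and> poly P x = 0}"
  have cf1: "cf a 1 \<ge> 0"
  proof -
    have "\<Gamma> \<subseteq> Tset" using assms(2) by (rule in_components_subset)
    also have "Tset \<subseteq> {a. cf a 1 \<ge> 0}"
    proof
      fix b assume "b \<in> Tset"
      hence "\<forall>k\<in>{1..5}. cf b k > 0" by (simp add: Tset_def)
      hence "cf b 1 > 0" by (rule bspec) simp
      thus "b \<in> {a. cf a 1 \<ge> 0}" by simp
    qed
    finally have "closure \<Gamma> \<subseteq> {a. cf a 1 \<ge> 0}"
    proof (rule closure_minimal)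
      show "closed {a::real^10. cf a 1 \<ge> 0}" unfolding cf_def
        by (intro closed_Collect_le continuous_intros)
    qed
    with a show ?thesis by auto
  qed
  have degP: "degree P = 11" unfolding P_def by (rule degree_Ppoly)
  have P0: "P \<noteq> 0" using degP by auto
  have c10: "coeff P 10 = -1" and c1: "coeff P 1 = cf a 1" and c11: "coeff P 11 = 1"
    unfolding P_def by (simp_all add: coeff_Ppoly)
  define M where "M = proots P"
  have setM: "set_mset M = {x. poly P x = 0}" using P0 by (simp add: M_def)
  have cntM: "\<And>x. count M x = order x P" using P0 by (simp add: M_def)
  have finZ: "finite {x. poly P x = 0}" using P0 by (rule poly_roots_finite)
  have sizeM: "size M = (\<Sum>x\<in>{x. poly P x = 0}. order x P)"
    by (simp add: size_multiset_overloaded_eq setM cntM)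
  have "11 = order x0 P + (\<Sum>x\<in>N. order x P)"
    using x0 neg by (simp add: P_def N_def)
  also have "\<dots> = (\<Sum>x\<in>insert x0 N. order x P)"
    using finZ x0 by (subst sum.insert) (auto simp: N_def intro: finite_subset)
  also have "\<dots> \<le> (\<Sum>x\<in>{x. poly P x = 0}. order x P)"
    using finZ x0 by (intro sum_mono2) (auto simp: N_def P_def)
  finally have size11: "size M \<ge> 11" using sizeM by simp
  obtain q where q: "P = (\<Prod>x\<in>#M. [:-x,1:]) * q"
    using poly_split_roots[of P] unfolding M_def by blast
  have q0: "q \<noteq> 0" using q P0 by auto
  define R where "R = (\<Prod>x\<in>#M. [:-x,1::real:])"
  have Rd: "degree R = size M" and Rl: "lead_coeff R = 1" using prod_lin_deg[of M] by (auto simp: R_def)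
  have R0: "R \<noteq> 0" using Rl by auto
  have q': "P = R * q" using q R_def by simp
  have "degree P = size M + degree q" unfolding q' using R0 q0 Rd by (simp add: degree_mult_eq)
  moreover have "lead_coeff P = lead_coeff q" unfolding q' using Rl by (simp only: lead_coeff_mult)
  ultimately
  have "degree q = 0" "lead_coeff q = 1" using size11 degP c11 by auto
  then have "q = 1"
  proof -
    assume dq: "degree q = 0" and lq: "lead_coeff q = 1"
    from dq obtain c where qc: "q = [:c:]" by (rule degree_eq_zeroE)
    with lq have "c = 1" by simp
    with qc show "q = 1" by (simp add: one_pCons)
  qed
  hence PM: "P = (\<Prod>x\<in>#M. [:-x,1:])" using q by simp
  define B where "B = filter_mset (\<lambda>y. y < 0) M"
  define C where "C = filter_mset (\<lambda>y. \<not> y < 0) M"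
  have MBC: "M = B + C" unfolding B_def C_def by (rule multiset_partition)
  have setB: "set_mset B = N" by (auto simp: B_def N_def setM)
  have sizeB: "size B = 8"
  proof -
    have "size B = (\<Sum>x\<in>set_mset B. count B x)" by (simp add: size_multiset_overloaded_eq)
    also have "\<dots> = (\<Sum>x\<in>N. order x P)" unfolding setB
      by (intro sum.cong refl) (auto simp: B_def cntM N_def)
    finally show ?thesis using neg by (simp add: N_def P_def)
  qed
  have sizeC: "size C = 3"
  proof -
    have "size M = 11" using size11 size_proots_le[of P] degP by (simp add: M_def)
    then show ?thesis using MBC sizeB by simp
  qed
  have cC: "count C x0 = 3" using x0 by (simp add: C_def cntM P_def)
  have sub: "replicate_mset 3 x0 \<subseteq># C"
    using cC by (auto simp: subseteq_mset_def)
  have "size (C - replicate_mset 3 x0) = 0"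
    using sub sizeC by (simp add: size_Diff_submset)
  hence "C - replicate_mset 3 x0 = {#}" by simp
  hence C3: "C = replicate_mset 3 x0"
    using subset_mset.add_diff_inverse[OF sub] by simp
  obtain ys where ys: "mset ys = B" using ex_mset by blast
  define bs where "bs = map uminus ys"
  have bspos: "\<forall>b\<in>set bs. b > 0"
  proof
    fix b assume "b \<in> set bs"
    then obtain y where "y \<in> set ys" "b = -y" by (auto simp: bs_def)
    then have "y \<in># B" using ys by (metis set_mset_mset)
    then show "b > 0" using \<open>b = -y\<close> by (simp add: B_def)
  qed
  have lenbs: "length bs = 8" using sizeB by (simp add: bs_def ys[symmetric])
  define cs where "cs = [-x0,-x0,-x0] @ bs"
  have LPnil: "LP [] = 1" by (simp add: LP_def)
  have LPapp: "\<And>xs zs. LP (xs @ zs) = LP xs * LP zs"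
  proof -
    fix xs zs show "LP (xs @ zs) = LP xs * LP zs"
      by (induction xs) (simp_all only: LPnil LP_cons append.simps mult_1_left mult.assoc)
  qed
  have PLP: "P = LP cs"
  proof -
    have "(\<Prod>x\<in>#mset ys. [:-x,1:]) = prod_list (map (\<lambda>x. [:-x,1::real:]) ys)"
      by (simp only: mset_map[symmetric] prod_mset_prod_list)
    also have "\<dots> = LP bs" by (simp add: LP_def bs_def o_def)
    finally have PB: "(\<Prod>x\<in>#B. [:-x,1:]) = LP bs" by (simp only: ys)
    have PC: "(\<Prod>x\<in>#C. [:-x,1:]) = [:-x0,1:] * ([:-x0,1:] * [:-x0,1:])"
      by (simp only: C3 image_replicate_mset prod_mset_replicate_mset power3_eq_cube mult.assoc)
    have L3: "LP [-x0,-x0,-x0] = [:-x0,1:] * ([:-x0,1:] * [:-x0,1:])"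
      by (simp only: LP_cons LPnil mult_1_right)
    have "P = (\<Prod>x\<in>#B. [:-x,1:]) * (\<Prod>x\<in>#C. [:-x,1:])"
      by (simp only: PM MBC image_mset_union prod_mset.union)
    also have "\<dots> = LP cs" by (simp only: PB PC L3 cs_def LPapp mult.commute)
    finally show ?thesis .
  qed
  have lencs: "length cs = 11" using lenbs by (simp add: cs_def)
  have csnz: "\<forall>c\<in>set cs. c \<noteq> 0" using bspos x0 by (auto simp: cs_def)
  have props: "coeff (LP cs) (length cs - 1) = sum_list cs"
    "coeff (LP cs) 1 = prod_list cs * sum_list (map inverse cs)"
    using LP_props[of cs] csnz lencs by auto
  define S where "S = sum_list bs"
  define T where "T = sum_list (map inverse bs)"
  define Pr where "Pr = prod_list bs"
  have S0: "S \<ge> 0" unfolding S_def using bspos by (intro sum_list_nonneg) auto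
  have T0: "T \<ge> 0" unfolding T_def using bspos by (intro sum_list_nonneg) auto
  have Pr0: "Pr > 0" unfolding Pr_def using bspos by (induction bs) (auto)
  have sc: "sum_list cs = -1" using props(1) lencs c10 PLP by simp
  have eqS: "-1 = S - 3 * x0"
  proof -
    have "sum_list cs = -x0 + (-x0 + (-x0 + S))" by (simp add: cs_def S_def)
    then show ?thesis using sc by linarith
  qed
  have pc: "prod_list cs = - (x0^3) * Pr" by (simp add: cs_def Pr_def power3_eq_cube)
  have ic: "sum_list (map inverse cs) = T - 3 / x0" by (simp add: cs_def T_def divide_inverse)
  have eq1: "cf a 1 = (- (x0^3) * Pr) * (T - 3 / x0)"
    using props(2) c1 PLP by (simp only: pc ic)
  have "(- (x0^3) * Pr) < 0" using x0 Pr0 by simp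
  hence "T - 3 / x0 \<le> 0" using eq1 cf1 by (metis mult_neg_pos not_le)
  hence Tle: "T \<le> 3 / x0" by simp
  have "S * T \<le> S * (3 / x0)" by (rule mult_left_mono[OF Tle S0])
  also have "\<dots> < 3 * x0 * (3 / x0)" using eqS x0 by (intro mult_strict_right_mono) auto
  also have "\<dots> = 9" using x0 by simp
  finally have "S * T < 9" .
  moreover have "S * T \<ge> 64" using amhm[OF bspos] lenbs by (simp add: S_def T_def)
  ultimately show False by simp
qed

end
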